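(* There is an absolute constant $c>0$ such that the following holds. Let $k\geq 2$ be an integer and let $A=\{a_1<\cdots<a_N\}$ be a finite set of real numbers which is $k$-convex. Then \[ |2^{k}A-(2^{k}-1)A|\geq c\,\frac{|A|^{k+1}}{2^{k^2}}. \]
   Context: For a set $A\subset\mathbb{R}$ and nonnegative integers $m,n$, $mA-nA=\{(x_1+\cdots+x_m)-(x_{m+1}+\cdots+x_{m+n}):x_1,\ldots,x_{m+n}\in A\}$. A finite set $A=\{a_1<\cdots<a_N\}$ of reals is regarded as the sequence of its elements in increasing order. Such a sequence is called $1$-convex (convex) if its sequence of first differences $a_{i+1}-a_i$, $1\leq i\leq N-1$, is strictly increasing. Inductively, for $k\geq 2$, the increasing sequence $a_1<\cdots<a_N$ is called $k$-convex if its sequence of first differences $(a_{i+1}-a_i)_{1\le i\le N-1}$ is $(k-1)$-convex (in particular this difference sequence is itself strictly increasing). *)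

theory Defs
  imports Complex_Main
begin

definition strict_incr :: "real list \<Rightarrow> bool" where
  "strict_incr xs \<longleftrightarrow> (\<forall>i. Suc i < length xs \<longrightarrow> xs ! i < xs ! Suc i)"

definition diffs :: "real list \<Rightarrow> real list" where
  "diffs xs = map (\<lambda>i. xs ! Suc i - xs ! i) [0..<length xs - 1]"

text \<open>So 1-convex is
  "strictly increasing first differences" (for an increasing sequence).\<close>
fun kconvex_seq :: "nat \<Rightarrow> real list \<Rightarrow> bool" where
  "kconvex_seq 0 xs = strict_incr xs"
| "kconvex_seq (Suc k) xs = (strict_incr xs \<and> kconvex_seq k (diffs xs))"

definition kconvex_set :: "nat \<Rightarrow> real set \<Rightarrow> bool" where
  "kconvex_set k A \<longleftrightarrow> finite A \<and> kconvex_seq k (sorted_list_of_set A)"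

definition sumdiff :: "nat \<Rightarrow> nat \<Rightarrow> real set \<Rightarrow> real set" where
  "sumdiff m n A = {(\<Sum>i<m. x i) - (\<Sum>i<n. x (m + i)) | x. \<forall>i < m + n. x i \<in> A}"

end

theory Submission
  imports Defs
begin

definition SD :: "nat \<Rightarrow> nat \<Rightarrow> real set \<Rightarrow> real set" where
  "SD m n A = {sum_list xs - sum_list ys | xs ys. length xs = m \<and> length ys = n \<and> set xs \<subseteq> A \<and> set ys \<subseteq> A}"

lemma SD_add: "u \<in> SD m n A \<Longrightarrow> v \<in> SD m' n' A \<Longrightarrow> u + v \<in> SD (m+m') (n+n') A"
proof -
  assume "u \<in> SD m n A" "v \<in> SD m' n' A"
  then obtain xs ys xs' ys' where a: "u = sum_list xs - sum_list ys" "length xs = m" "length ys = n" "set xs \<subseteq> A" "set ys \<subseteq> A"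
    and b: "v = sum_list xs' - sum_list ys'" "length xs' = m'" "length ys' = n'" "set xs' \<subseteq> A" "set ys' \<subseteq> A"
    unfolding SD_def by blast
  have "u + v = sum_list (xs @ xs') - sum_list (ys @ ys')" using a b by simp
  thus ?thesis unfolding SD_def using a b by (intro CollectI exI[of _ "xs@xs'"] exI[of _ "ys@ys'"]) auto
qed

lemma SD_sub: "u \<in> SD m n A \<Longrightarrow> v \<in> SD m' n' A \<Longrightarrow> u - v \<in> SD (m+n') (n+m') A"
proof -
  assume "u \<in> SD m n A" "v \<in> SD m' n' A"
  then obtain xs ys xs' ys' where a: "u = sum_list xs - sum_list ys" "length xs = m" "length ys = n" "set xs \<subseteq> A" "set ys \<subseteq> A"
    and b: "v = sum_list xs' - sum_list ys'" "length xs' = m'" "length ys' = n'" "set xs' \<subseteq> A" "set ys' \<subseteq> A"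
    unfolding SD_def by blast
  have "u - v = sum_list (xs @ ys') - sum_list (ys @ xs')" using a b by simp
  thus ?thesis unfolding SD_def using a b by (intro CollectI exI[of _ "xs@ys'"] exI[of _ "ys@xs'"]) auto
qed

lemma SD_single: "a \<in> A \<Longrightarrow> a \<in> SD 1 0 A"
  unfolding SD_def by (intro CollectI exI[of _ "[a]"] exI[of _ "[]"]) auto

lemma SD_sumdiff: "SD m n A \<subseteq> sumdiff m n A"
proof
  fix u assume "u \<in> SD m n A"
  then obtain xs ys where a: "u = sum_list xs - sum_list ys" "length xs = m" "length ys = n" "set xs \<subseteq> A" "set ys \<subseteq> A"
    unfolding SD_def by blast
  define x where "x = (\<lambda>i. (xs @ ys) ! i)"
  have 1: "(\<Sum>i<m. x i) = sum_list xs"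
    using a by (simp add: x_def sum_list_sum_nth atLeast0LessThan nth_append)
  have 2: "(\<Sum>i<n. x (m+i)) = sum_list ys"
    using a by (simp add: x_def sum_list_sum_nth atLeast0LessThan nth_append)
  have 3: "\<forall>i<m+n. x i \<in> A"
  proof (intro allI impI)
    fix i assume "i < m+n"
    hence "(xs@ys) ! i \<in> set (xs@ys)" using a by (intro nth_mem) simp
    thus "x i \<in> A" using a by (auto simp: x_def)
  qed
  show "u \<in> sumdiff m n A" unfolding sumdiff_def using 1 2 3 a(1) by (intro CollectI exI[of _ x]) simp
qed

lemma finite_sumdiff: "finite A \<Longrightarrow> finite (sumdiff m n A)"
proof -
  assume fA: "finite A"
  have "sumdiff m n A \<subseteq> (\<lambda>xs. (\<Sum>i<m. xs!i) - (\<Sum>i<n. xs!(m+i))) ` {xs. set xs \<subseteq> A \<and> length xs = m+n}"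
  proof
    fix u assume "u \<in> sumdiff m n A"
    then obtain x where u: "u = (\<Sum>i<m. x i) - (\<Sum>i<n. x (m + i))" "\<forall>i<m+n. x i \<in> A"
      unfolding sumdiff_def by blast
    define xs where "xs = map x [0..<m+n]"
    have "u = (\<Sum>i<m. xs!i) - (\<Sum>i<n. xs!(m+i))" using u by (simp add: xs_def)
    moreover have "xs \<in> {xs. set xs \<subseteq> A \<and> length xs = m+n}" using u(2) by (auto simp: xs_def)
    ultimately show "u \<in> (\<lambda>xs. (\<Sum>i<m. xs!i) - (\<Sum>i<n. xs!(m+i))) ` {xs. set xs \<subseteq> A \<and> length xs = m+n}" by blast
  qed
  thus ?thesis using finite_lists_length_eq[OF fA, of "m+n"] by (meson finite_imageI finite_subset)
qed

lemma strict_incr_less: "strict_incr x \<Longrightarrow> i < p \<Longrightarrow> p < length x \<Longrightarrow> x!i < x!p"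
proof (induction p)
  case 0 then show ?case by simp
next
  case (Suc p)
  have "x!p < x!Suc p" using Suc.prems unfolding strict_incr_def by auto
  then show ?case using Suc by (cases "i = p") auto
qed

lemma strict_incr_le: "strict_incr x \<Longrightarrow> i \<le> p \<Longrightarrow> p < length x \<Longrightarrow> x!i \<le> x!p"
  using strict_incr_less by (cases "i = p") (auto intro: less_imp_le)

lemma length_diffs[simp]: "length (diffs x) = length x - 1"
  by (simp add: diffs_def)

lemma nth_diffs: "j < length x - 1 \<Longrightarrow> diffs x ! j = x!Suc j - x!j"
  by (simp add: diffs_def)

fun F :: "real list \<Rightarrow> nat \<Rightarrow> nat list \<Rightarrow> real" where
  "F x i [] = x ! i"
| "F x i (j#js) = x ! i + F (diffs x) j js"

fun dec :: "nat \<Rightarrow> nat list \<Rightarrow> bool" where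
  "dec i [] = True"
| "dec i (j#js) = (j < i \<and> dec j js)"

lemma F_bounds:
  "kconvex_seq (length js) x \<Longrightarrow> dec i js \<Longrightarrow> i < length x \<Longrightarrow>
   x!i \<le> F x i js \<and> (\<forall>p. i < p \<and> p < length x \<longrightarrow> F x i js < x!p)"
proof (induction js arbitrary: x i)
  case Nil
  then show ?case using strict_incr_less by auto
next
  case (Cons j js)
  have si: "strict_incr x" and kc: "kconvex_seq (length js) (diffs x)" using Cons.prems by auto
  have ji: "j < i" and dj: "dec j js" using Cons.prems by auto
  have jl: "j < length (diffs x)" using ji Cons.prems by simp
  from Cons.IH[OF kc dj jl] have ih: "diffs x ! j \<le> F (diffs x) j js"
    "\<And>p. j < p \<Longrightarrow> p < length x - 1 \<Longrightarrow> F (diffs x) j js < diffs x ! p" by auto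
  have "diffs x ! j = x!Suc j - x!j" using jl by (simp add: nth_diffs)
  moreover have "x!j < x!Suc j" using si jl unfolding strict_incr_def by auto
  ultimately have pos: "0 < F (diffs x) j js" using ih(1) by linarith
  have "F x i (j#js) < x!p" if "i < p" "p < length x" for p
  proof -
    have il: "i < length x - 1" using that by simp
    have "F (diffs x) j js < diffs x ! i" using ih(2)[OF ji il] .
    also have "\<dots> = x!Suc i - x!i" using il by (simp add: nth_diffs)
    finally have "x!i + F (diffs x) j js < x!Suc i" by simp
    also have "x!Suc i \<le> x!p" using strict_incr_le[OF si, of "Suc i" p] that by simp
    finally show ?thesis by simp
  qed
  then show ?case using pos by auto
qed

lemma F_inj:
  "kconvex_seq (length js) x \<Longrightarrow> length js' = length js \<Longrightarrow> dec i js \<Longrightarrow> dec i' js' \<Longrightarrow>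
   i < length x \<Longrightarrow> i' < length x \<Longrightarrow> F x i js = F x i' js' \<Longrightarrow> i = i' \<and> js = js'"
proof (induction js arbitrary: x i i' js')
  case Nil
  then have "js' = []" by simp
  have "i = i'"
  proof (rule ccontr)
    assume "i \<noteq> i'"
    then consider "i < i'" | "i' < i" by linarith
    then show False
    proof cases
      case 1
      have "F x i [] < x!i'" using F_bounds[of "[]" x i] Nil 1 by auto
      moreover have "x!i' \<le> F x i' js'" using F_bounds[of js' x i'] Nil \<open>js' = []\<close> by auto
      ultimately show False using Nil by simp
    next
      case 2
      have "F x i' js' < x!i" using F_bounds[of "js'" x i'] Nil 2 \<open>js' = []\<close> by auto
      moreover have "x!i \<le> F x i []" using F_bounds[of "[]" x i] Nil by auto
      ultimately show False using Nil by simp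
    qed
  qed
  then show ?case using \<open>js' = []\<close> by simp
next
  case (Cons j js)
  obtain j' js'' where js': "js' = j' # js''" using Cons.prems(2) by (cases js') auto
  have kc': "kconvex_seq (length js') x" using Cons.prems(1,2) by simp
  have "i = i'"
  proof (rule ccontr)
    assume "i \<noteq> i'"
    then consider "i < i'" | "i' < i" by linarith
    then show False
    proof cases
      case 1
      have "F x i (j#js) < x!i'" using F_bounds[of "j#js" x i] Cons.prems 1 by auto
      moreover have "x!i' \<le> F x i' js'" using F_bounds[OF kc', of i'] Cons.prems by auto
      ultimately show False using Cons.prems by simp
    next
      case 2
      have "F x i' js' < x!i" using F_bounds[OF kc', of i'] Cons.prems 2 by auto
      moreover have "x!i \<le> F x i (j#js)" using F_bounds[of "j#js" x i] Cons.prems by auto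
      ultimately show False using Cons.prems by simp
    qed
  qed
  then have eq: "F (diffs x) j js = F (diffs x) j' js''" using Cons.prems js' by simp
  have "j = j' \<and> js = js''"
    apply (rule Cons.IH[OF _ _ _ _ _ _ eq])
    using Cons.prems js' \<open>i = i'\<close> by auto
  then show ?case using \<open>i = i'\<close> js' by simp
qed

lemma F_mem:
  "(\<forall>e\<in>set x. e \<in> SD p p A) \<Longrightarrow> dec i js \<Longrightarrow> i < length x \<Longrightarrow>
   \<exists>q. q + p = p * 2^(Suc (length js)) \<and> F x i js \<in> SD q q A"
proof (induction js arbitrary: x i p)
  case Nil
  then show ?case by (intro exI[of _ p]) auto
next
  case (Cons j js)
  have d: "\<forall>e\<in>set (diffs x). e \<in> SD (p+p) (p+p) A"
  proof
    fix e assume "e \<in> set (diffs x)"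
    then obtain t where t: "t < length x - 1" "e = x!Suc t - x!t" unfolding diffs_def by auto
    have "x!Suc t \<in> SD p p A" "x!t \<in> SD p p A" using Cons.prems(1) t(1) by auto
    then show "e \<in> SD (p+p) (p+p) A" using SD_sub t(2) by fastforce
  qed
  have "j < length (diffs x)" using Cons.prems by auto
  then obtain q where q: "q + (p+p) = (p+p) * 2^(Suc (length js))" "F (diffs x) j js \<in> SD q q A"
    using Cons.IH[OF d] Cons.prems by auto
  have "x!i \<in> SD p p A" using Cons.prems by auto
  then have "F x i (j#js) \<in> SD (p+q) (p+q) A" using SD_add[OF _ q(2)] by simp
  moreover have "(p+q) + p = p * 2^(Suc (length (j#js)))" using q(1) by (simp add: algebra_simps)
  ultimately show ?case by blast
qed

fun g :: "nat \<Rightarrow> nat list \<Rightarrow> nat list" where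
  "g M [] = []"
| "g M (a#os) = (length os * M + a) # g M os"

lemma length_g[simp]: "length (g M os) = length os"
  by (induction os) auto

lemma g_dec: "\<forall>b\<in>set (a#os). b < M \<Longrightarrow> dec (length os * M + a) (g M os)"
proof (induction os arbitrary: a)
  case Nil then show ?case by simp
next
  case (Cons b os)
  then show ?case by auto
qed

lemma g_inj: "length o1 = length o2 \<Longrightarrow> g M o1 = g M o2 \<Longrightarrow> o1 = o2"
proof (induction o1 arbitrary: o2)
  case Nil then show ?case by simp
next
  case (Cons a os)
  then obtain b os' where "o2 = b # os'" by (cases o2) auto
  then show ?case using Cons by auto
qed

lemma arith_bound: "k \<ge> 2 \<Longrightarrow> (2*k+2)^(k+1) \<le> 16 * (2::nat)^(k^2)"
proof -
  assume k: "k \<ge> 2"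
  consider "k = 2" | "k = 3" | "k = 4" | "k \<ge> 5" using k by linarith
  then show ?thesis
  proof cases
    case 4
    then obtain j where j: "k = j + 5" using le_Suc_ex by (metis add.commute)
    have b: "2*(j+5)+2 \<le> (2::nat)^(j+4)"
    proof (induction j)
      case (Suc j)
      have "(2::nat)^(Suc j + 4) = 2 * 2^(j+4)" by (simp add: power_Suc[symmetric])
      moreover have "2 * (Suc j + 5) + 2 = (2 * (j + 5) + 2) + (2::nat)" by simp
      moreover have "(2::nat) \<le> 2^(j+4)" by (simp add: self_le_power)
      ultimately show ?case using Suc.IH by linarith
    qed simp
    have "(2*k+2)^(k+1) \<le> ((2::nat)^(j+4))^(k+1)" using b j by (intro power_mono) auto
    also have "\<dots> = 2^((j+4)*(k+1))" by (simp only: power_mult)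
    also have "\<dots> \<le> 2^(k^2)" using j by (intro power_increasing) (auto simp: power2_eq_square algebra_simps)
    finally show ?thesis by simp
  qed auto
qed

lemma main_count:
  assumes k: "k \<ge> 1" and fA: "finite A" and kc: "kconvex_set k A"
  shows "(card A div (k+1))^(k+1) \<le> card (sumdiff (2^k) (2^k - 1) A)"
proof -
  define L where "L = sorted_list_of_set A"
  define N where "N = card A"
  define M where "M = N div (k+1)"
  have lenL: "length L = N" and setL: "set L = A" using fA by (auto simp: L_def N_def)
  have kcL: "kconvex_seq k L" using kc by (simp add: kconvex_set_def L_def)
  have MN: "(k+1) * M \<le> N" unfolding M_def by (metis div_times_less_eq_dividend mult.commute)
  define S where "S = {w. set w \<subseteq> {..<M} \<and> length w = Suc k}"
  define h where "h w = F L (hd (g M w)) (tl (g M w))" for w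
  have props: "hd (g M w) < N \<and> dec (hd (g M w)) (tl (g M w)) \<and> length (tl (g M w)) = k
      \<and> (\<exists>a os. w = a # os \<and> hd (g M w) = k * M + a \<and> tl (g M w) = g M os \<and> length os = k \<and> (\<forall>b\<in>set (a#os). b < M))"
    if wS: "w \<in> S" for w
  proof -
    obtain a os where w: "w = a # os" and los: "length os = k" and bM: "\<forall>b\<in>set (a#os). b < M"
      using wS unfolding S_def by (cases w) auto
    have "k * M + a < (k+1) * M" using bM by simp
    then have "k * M + a < N" using MN by linarith
    then show ?thesis using w los bM g_dec[OF bM] by auto
  qed
  have inj: "inj_on h S"
  proof (rule inj_onI)
    fix w1 w2 assume w1: "w1 \<in> S" and w2: "w2 \<in> S" and eq: "h w1 = h w2"
    have p1: "hd (g M w1) < N" "dec (hd (g M w1)) (tl (g M w1))" "length (tl (g M w1)) = k"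
      using props[OF w1] by blast+
    have p2: "hd (g M w2) < N" "dec (hd (g M w2)) (tl (g M w2))" "length (tl (g M w2)) = k"
      using props[OF w2] by blast+
    have kc1: "kconvex_seq (length (tl (g M w1))) L" using kcL p1(3) by simp
    have "hd (g M w1) = hd (g M w2) \<and> tl (g M w1) = tl (g M w2)"
      apply (rule F_inj[OF kc1])
      using p1 p2 lenL eq unfolding h_def by simp_all
    moreover have "g M w1 \<noteq> []" "g M w2 \<noteq> []" using w1 w2 unfolding S_def
      by (simp_all flip: length_0_conv)
    ultimately have "g M w1 = g M w2" using list.collapse by metis
    moreover have "length w1 = length w2" using w1 w2 unfolding S_def by simp
    ultimately show "w1 = w2" using g_inj by blast
  qed
  have mem: "h w \<in> sumdiff (2^k) (2^k - 1) A" if wS: "w \<in> S" for w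
  proof -
    obtain a os where w: "w = a # os" and hd: "hd (g M w) = k * M + a" and tl: "tl (g M w) = g M os"
      and los: "length os = k" and bM: "\<forall>b\<in>set (a#os). b < M" and iN: "hd (g M w) < N"
      and dd: "dec (hd (g M w)) (tl (g M w))"
      using props[OF wS] by blast
    obtain b os' where os: "os = b # os'" using los k by (cases os) auto
    define i where "i = k * M + a"
    define j where "j = length os' * M + b"
    have ho: "h w = L!i + F (diffs L) j (g M os')"
      unfolding h_def using hd tl os by (simp add: i_def j_def)
    have ji: "j < i" using dd hd tl os by (simp add: i_def j_def)
    have iN': "i < N" using iN hd i_def by simp
    have dj: "dec j (g M os')" unfolding j_def using bM os by (intro g_dec) auto
    have dL: "\<forall>e\<in>set (diffs L). e \<in> SD 1 1 A"
    proof
      fix e assume "e \<in> set (diffs L)"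
      then obtain t where t: "t < length L - 1" "e = L!Suc t - L!t" unfolding diffs_def by auto
      have "L!Suc t \<in> A" "L!t \<in> A" using t(1) setL nth_mem by (metis Suc_lessD less_diff_conv add.commute plus_1_eq_Suc)+
      then have "L!Suc t \<in> SD 1 0 A" "L!t \<in> SD 1 0 A" by (simp_all only: SD_single)
      then show "e \<in> SD 1 1 A" using SD_sub[of "L!Suc t" 1 0 A "L!t" 1 0] t(2) by simp
    qed
    have "j < length (diffs L)" using ji iN' lenL by simp
    then obtain q where q: "q + 1 = 1 * 2^(Suc (length (g M os')))" "F (diffs L) j (g M os') \<in> SD q q A"
      using F_mem[OF dL dj] by blast
    have "Suc (length os') = k" using los os by simp
    then have q2: "q + 1 = 2^k" using q(1) by (metis length_g mult_1)
    have "L!i \<in> A" using iN' lenL setL nth_mem by metis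
    then have "L!i \<in> SD 1 0 A" by (simp only: SD_single)
    then have "h w \<in> SD (1+q) (0+q) A" unfolding ho by (rule SD_add[OF _ q(2)])
    moreover have "1 + q = 2^k" "0 + q = 2^k - 1" using q2 by auto
    ultimately show ?thesis using SD_sumdiff by auto
  qed
  have cS: "card S = M^(Suc k)" unfolding S_def using card_lists_length_eq[of "{..<M}" "Suc k"] by simp
  have "M^(Suc k) = card (h ` S)" using card_image[OF inj] cS by simp
  also have "\<dots> \<le> card (sumdiff (2^k) (2^k - 1) A)"
    using mem finite_sumdiff[OF fA] by (intro card_mono) auto
  finally show ?thesis by (simp add: M_def N_def)
qed

lemma nat_bound:
  assumes k: "k \<ge> 2" and fA: "finite A" and kc: "kconvex_set k A"
  shows "card A ^ (k+1) \<le> 16 * 2^(k^2) * card (sumdiff (2^k) (2^k - 1) A)"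
proof -
  define N where "N = card A"
  define C where "C = card (sumdiff (2^k) (2^k - 1) A)"
  define M where "M = N div (k+1)"
  have cnt: "M^(k+1) \<le> C" using main_count[OF _ fA kc] k by (simp add: M_def N_def C_def)
  have ab: "(2*k+2)^(k+1) \<le> 16 * (2::nat)^(k^2)" using arith_bound[OF k] .
  show ?thesis
  proof (cases "N = 0")
    case True then show ?thesis by (simp add: N_def)
  next
    case False
    then obtain a where a: "a \<in> A" using N_def by fastforce
    have "(\<Sum>i<(2::nat)^k. (\<lambda>_::nat. a) i) - (\<Sum>i<(2::nat)^k - 1. (\<lambda>_::nat. a) (2^k + i)) \<in> sumdiff (2^k) (2^k - 1) A"
      unfolding sumdiff_def using a by (intro CollectI exI[of _ "\<lambda>_::nat. a"]) simp
    then have C1: "C \<ge> 1" unfolding C_def using finite_sumdiff[OF fA]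
      by (metis One_nat_def Suc_leI card_gt_0_iff empty_iff)
    show ?thesis
    proof (cases "N \<le> k")
      case True
      have "N^(k+1) \<le> (2*k+2)^(k+1)" using True by (intro power_mono) auto
      also have "\<dots> \<le> 16 * 2^(k^2)" by (rule ab)
      also have "\<dots> \<le> 16 * 2^(k^2) * C" using C1 by simp
      finally show ?thesis by (simp add: N_def C_def)
    next
      case False
      have M1: "M \<ge> 1" using False by (simp add: M_def div_greater_zero_iff Suc_leI)
      have e1: "N = (k+1) * M + N mod (k+1)" unfolding M_def by (metis div_mult_mod_eq mult.commute)
      have e2: "N mod (k+1) < k+1" by simp
      have e3: "(k+1) * M \<ge> k+1" using M1 mult_le_mono2[of 1 M "k+1"] by simp
      have e4: "(2*k+2) * M = (k+1) * M + (k+1) * M" by (simp add: algebra_simps)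
      have "N \<le> (2*k+2) * M" using e1 e2 e3 e4 by linarith
      then have "N^(k+1) \<le> ((2*k+2) * M)^(k+1)" by (intro power_mono) auto
      also have "\<dots> = (2*k+2)^(k+1) * M^(k+1)" by (rule power_mult_distrib)
      also have "\<dots> \<le> 16 * 2^(k^2) * C" using ab cnt by (intro mult_le_mono) auto
      finally show ?thesis by (simp add: N_def C_def)
    qed
  qed
qed

theorem theorem3:
  shows "\<exists>c::real. c > 0 \<and>
    (\<forall>(k::nat) (A::real set). k \<ge> 2 \<longrightarrow> finite A \<longrightarrow> kconvex_set k A \<longrightarrow>
       real (card (sumdiff (2^k) (2^k - 1) A)) \<ge> c * real (card A) ^ (k+1) / 2 ^ (k^2))"
proof (intro exI[of _ "1/16"] conjI allI impI)
  show "(0::real) < 1/16" by simp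
  fix k :: nat and A :: "real set"
  assume k: "k \<ge> 2" and fA: "finite A" and kc: "kconvex_set k A"
  define C where "C = card (sumdiff (2^k) (2^k - 1) A)"
  have h: "card A ^ (k+1) \<le> 16 * 2^(k^2) * C" using nat_bound[OF k fA kc] by (simp add: C_def)
  then have "real (card A ^ (k+1)) \<le> real (16 * 2^(k^2) * C)" by (simp only: of_nat_le_iff)
  then have h2: "real (card A) ^ (k+1) \<le> 16 * 2^(k^2) * real C" by simp
  have "1/16 * real (card A) ^ (k+1) / 2^(k^2) \<le> real C"
    using h2 by (simp add: field_simps)
  then show "1/16 * real (card A) ^ (k+1) / 2^(k^2) \<le> real (card (sumdiff (2^k) (2^k - 1) A))"
    by (simp add: C_def)
qed

end
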